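(* Let $k>2$ be an integer with $k\equiv 2 \pmod 4$ and let $n=\frac{1}{4}k^2-1$. If $\frac{k}{2}$ is not a prime, then any function $f:[n]\to \{-1,1\}$ with $f([n])=0$ admits a $k$-term arithmetic progression $A\subseteq[n]$ with $f(A)=0$.
   Context: $[n]=\{1,\dots,n\}$; $f(Y)=\sum_{y\in Y}f(y)$. *)

theory Defs
  imports "HOL-Computational_Algebra.Primes"
begin

definition is_kAP :: "nat \<Rightarrow> nat set \<Rightarrow> bool" where
  "is_kAP k A \<longleftrightarrow> (\<exists>a d. d \<ge> 1 \<and> A = {a + i * d | i. i < k})"

end

theory Submission
  imports Defs
begin


lemma sum_pm1_even:
  fixes f :: "'a \<Rightarrow> int"
  shows "finite A \<Longrightarrow> \<forall>x\<in>A. f x \<in> {-1,1} \<Longrightarrow> even (sum f A) = even (card A)"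
proof (induction A rule: finite_induct)
  case empty then show ?case by simp
next
  case (insert x F)
  then have "odd (f x)" by auto
  have "sum f (insert x F) = f x + sum f F" using insert by simp
  moreover have "card (insert x F) = Suc (card F)" using insert by simp
  moreover have "even (sum f F) = even (card F)" using insert by simp
  ultimately show ?case using \<open>odd (f x)\<close> by simp
qed

lemma even_pos_ge2:
  fixes s :: int
  assumes "s > 0" "even s"
  shows "s \<ge> 2"
proof -
  obtain t where "s = 2*t" using assms(2) by (auto elim: evenE)
  thus ?thesis using assms(1) by presburger
qed

lemma all_eq_lower:
  fixes g :: "'a \<Rightarrow> int"
  assumes "finite A" "\<forall>x\<in>A. c \<le> g x" "sum g A \<le> c * int (card A)"
  shows "\<forall>x\<in>A. g x = c"
proof -
  have sc: "sum (\<lambda>x. c) A = c * int (card A)"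
    by (simp add: sum_constant mult.commute)
  have "sum (\<lambda>x. g x - c) A = sum g A - sum (\<lambda>x. c) A"
    by (rule sum_subtractf)
  hence le: "sum (\<lambda>x. g x - c) A \<le> 0" using assms(3) sc by linarith
  have nn: "\<And>x. x \<in> A \<Longrightarrow> 0 \<le> g x - c" using assms(2) by auto
  have "0 \<le> sum (\<lambda>x. g x - c) A" using nn by (rule sum_nonneg)
  hence s0: "sum (\<lambda>x. g x - c) A = 0" using le by linarith
  have "(sum (\<lambda>x. g x - c) A = 0) = (\<forall>x\<in>A. g x - c = 0)"
    by (rule sum_nonneg_eq_0_iff[OF assms(1)]) (rule nn)
  hence "\<forall>x\<in>A. g x - c = 0" using s0 by blast
  thus ?thesis by simp
qed

lemma sum_ge_card:
  fixes g :: "'a \<Rightarrow> int"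
  assumes "\<forall>x\<in>A. c \<le> g x"
  shows "sum g A \<ge> c * int (card A)"
proof (cases "finite A")
  case True
  have "sum (\<lambda>_. c) A \<le> sum g A" using assms by (intro sum_mono) auto
  thus ?thesis by (simp add: mult.commute)
next
  case False thus ?thesis by simp
qed

lemma diffS:
  fixes f :: "nat \<Rightarrow> int"
  assumes "M > 0"
  shows "sum f {Suc x + 1..<Suc x + 1 + M} = sum f {x+1..<x+1+M} - f (x+1) + f (x+1+M)"
proof -
  have "sum f {x+1..<Suc (x+1+M)} = f (x+1) + sum f {Suc (x+1)..<Suc (x+1+M)}"
    using assms by (subst sum.atLeast_Suc_lessThan) auto
  moreover have "sum f {x+1..<Suc (x+1+M)} = sum f {x+1..<x+1+M} + f (x+1+M)"
    by (subst sum.atLeastLessThan_Suc) auto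
  ultimately show ?thesis by (simp add: add.commute add.left_commute)
qed

lemma blocks:
  fixes f :: "nat \<Rightarrow> int"
  shows "sum f {a..<a+M*h} = (\<Sum>j<h. sum f {a+M*j..<a+M*j+M})"
proof (induction h)
  case 0 then show ?case by simp
next
  case (Suc h)
  have "sum f {a..<a+M*Suc h} = sum f {a..<a+M*h} + sum f {a+M*h..<a+M*h+M}"
    by (subst sum.atLeastLessThan_concat[symmetric, of _ "a+M*h"]) (auto simp: algebra_simps)
  with Suc show ?case by simp
qed

lemma periodic_sum:
  fixes G :: "nat \<Rightarrow> int"
  assumes "(\<Sum>j<r. G j) = 0" "r > 0"
  shows "(\<Sum>i<r*s. G (i mod r)) = 0"
proof -
  have "(\<Sum>i<s*r. G (i mod r)) = (\<Sum>b<s. sum (\<lambda>i. G (i mod r)) {b*r..<b*r+r})"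
    by (rule sum.nat_group[symmetric])
  also have "\<dots> = (\<Sum>b<s. 0)"
  proof (rule sum.cong)
    fix b assume "b \<in> {..<s}"
    have "{b*r..<b*r+r} = {0+b*r..<r+b*r}" by (simp add: add.commute)
    hence "sum (\<lambda>i. G (i mod r)) {b*r..<b*r+r} = (\<Sum>j<r. G ((j + b*r) mod r))"
      using sum.shift_bounds_nat_ivl[of "\<lambda>i. G (i mod r)" 0 "b*r" r]
      by (simp only: atLeast0LessThan)
    also have "\<dots> = (\<Sum>j<r. G j)" by (rule sum.cong) auto
    finally show "sum (\<lambda>i. G (i mod r)) {b*r..<b*r+r} = 0" using assms by simp
  qed simp
  finally show ?thesis by (simp add: mult.commute)
qed

lemma main_lemma:
  fixes f :: "nat \<Rightarrow> int" and p q h n :: nat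
  assumes pq: "p*q = 2*h+1" and p3: "p \<ge> 3" and q3: "q \<ge> 3"
  and nn: "n = 4*h*h + 4*h"
  and pm: "\<forall>x\<in>{1..n}. f x \<in> {-1,1}"
  and s0: "sum f {1..<n+1} = 0"
  and pos: "\<forall>x. x + (4*h+2) \<le> n \<longrightarrow> sum f {x+1..<x+1+(4*h+2)} > 0"
  shows "\<exists>A. A \<subseteq> {1..n} \<and> is_kAP (4*h+2) A \<and> sum f A = 0"
proof -
  define M where "M = 4*h+2"
  define S where "S x = sum f {x+1..<x+1+M}" for x
  have nM: "n = M*h + 2*h" using nn by (simp add: M_def algebra_simps)
  have Spos: "S x \<ge> 2" if "x + M \<le> n" for x
  proof -
    have "S x > 0" using pos that by (simp add: S_def M_def)
    moreover have "even (S x)"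
    proof -
      have "\<forall>y\<in>{x+1..<x+1+M}. f y \<in> {-1,1}" using pm that by auto
      hence "even (S x) = even (card {x+1..<x+1+M})" unfolding S_def by (intro sum_pm1_even) auto
      thus ?thesis by (simp add: M_def)
    qed
    ultimately show ?thesis by (rule even_pos_ge2)
  qed
  have Sdiff: "S (Suc x) = S x - f (x+1) + f (x+1+M)" for x
    unfolding S_def using diffS[of M f x] by (simp add: M_def)
  have part: "(\<forall>y\<in>{1..<t+1}. f y = -1) \<and> (\<forall>j<h. S (t + M*j) = 2) \<and> (\<forall>y\<in>{t+1+M*h..<n+1}. f y = -1)"
    if tle: "t \<le> 2*h" for t
  proof -
    have c1: "sum f {1..<n+1} = sum f {1..<t+1} + sum f {t+1..<n+1}"
      using tle nM by (intro sum.atLeastLessThan_concat[symmetric]) auto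
    have c2: "sum f {t+1..<n+1} = sum f {t+1..<t+1+M*h} + sum f {t+1+M*h..<n+1}"
      using tle nM by (intro sum.atLeastLessThan_concat[symmetric]) auto
    have B: "sum f {t+1..<t+1+M*h} = (\<Sum>j<h. S (t + M*j))"
      unfolding S_def blocks by (simp add: ac_simps)
    have L1: "sum f {1..<t+1} \<ge> -1 * int (card {1..<t+1})"
      using pm tle nM by (intro sum_ge_card) force
    have L3: "sum f {t+1+M*h..<n+1} \<ge> -1 * int (card {t+1+M*h..<n+1})"
    proof (intro sum_ge_card ballI)
      fix x assume "x \<in> {t+1+M*h..<n+1}"
      hence "x \<in> {1..n}" by auto
      thus "-1 \<le> f x" using pm by force
    qed
    have Sj: "S (t + M*j) \<ge> 2" if "j < h" for j
    proof -
      have "M*(j+1) \<le> M*h" using that by (intro mult_le_mono2) simp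
      thus ?thesis using tle nM by (intro Spos) (simp add: algebra_simps)
    qed
    have L2: "(\<Sum>j<h. S (t + M*j)) \<ge> 2 * int (card {..<h})"
      using Sj by (intro sum_ge_card) auto
    have k1: "card {1..<t+1} = t" by simp
    have k3: "card {t+1+M*h..<n+1} = 2*h - t" using nM tle by simp
    have tot: "sum f {1..<t+1} + (\<Sum>j<h. S (t + M*j)) + sum f {t+1+M*h..<n+1} = 0"
      using s0 c1 c2 B by simp
    have e1: "sum f {1..<t+1} \<le> -1 * int (card {1..<t+1})"
      using tot L1 L2 L3 k1 k3 tle by simp
    have e2: "(\<Sum>j<h. S (t + M*j)) \<le> 2 * int (card {..<h})"
      using tot L1 L2 L3 k1 k3 tle by simp
    have e3: "sum f {t+1+M*h..<n+1} \<le> -1 * int (card {t+1+M*h..<n+1})"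
      using tot L1 L2 L3 k1 k3 tle by simp
    have lb: "-1 \<le> f x" if "x \<in> {1..n}" for x using pm that by force
    have "\<forall>y\<in>{1..<t+1}. -1 \<le> f y" using lb tle nM by auto
    hence r1: "\<forall>y\<in>{1..<t+1}. f y = -1"
      using all_eq_lower[OF _ _ e1] by simp
    have r2: "\<forall>j\<in>{..<h}. S (t + M*j) = 2"
      using all_eq_lower[OF _ _ e2] Sj by force
    have "\<forall>y\<in>{t+1+M*h..<n+1}. -1 \<le> f y" using lb by auto
    hence r3: "\<forall>y\<in>{t+1+M*h..<n+1}. f y = -1"
      using all_eq_lower[OF _ _ e3] by simp
    show ?thesis using r1 r2 r3 by auto
  qed

  have F3: "\<forall>r. 1 \<le> r \<longrightarrow> r \<le> 2*h \<longrightarrow> M*j + r \<le> n \<longrightarrow> f (M*j + r) = -1" for j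
  proof (induction j)
    case 0
    show ?case using part[of "2*h"] by auto
  next
    case (Suc j)
    show ?case
    proof (intro allI impI)
      fix r assume r1: "1 \<le> r" and r2: "r \<le> 2*h" and r3: "M * Suc j + r \<le> n"
      have jh: "j < h"
      proof (rule ccontr)
        assume "\<not> j < h"
        hence "M*(h+1) \<le> M * Suc j" by (intro mult_le_mono2) simp
        thus False using r3 r1 nM by (simp add: M_def algebra_simps)
      qed
      have a: "S (r - 1 + M*j) = 2" using part[of "r-1"] r2 jh by auto
      have b: "S (r + M*j) = 2" using part[of "r"] r2 jh by auto
      have "S (Suc (r - 1 + M*j)) = S (r - 1 + M*j) - f (r - 1 + M*j + 1) + f (r - 1 + M*j + 1 + M)"
        by (rule Sdiff)
      moreover have "Suc (r - 1 + M*j) = r + M*j" "r - 1 + M*j + 1 = M*j + r"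
        "r - 1 + M*j + 1 + M = M * Suc j + r" using r1 by auto
      ultimately have "f (M * Suc j + r) = f (M*j + r)" using a b by (simp add: ac_simps)
      moreover have "f (M*j + r) = -1" using Suc.IH r1 r2 r3 by auto
      ultimately show "f (M * Suc j + r) = -1" by simp
    qed
  qed
  have F4: "f (M*j + r) = 1" if jh: "j < h" and r1: "2*h+1 \<le> r" and r2: "r \<le> M" for j r
  proof -
    have jM: "M*j + M \<le> n"
    proof -
      have "M*(j+1) \<le> M*h" using jh by (intro mult_le_mono2) simp
      thus ?thesis using nM by (simp add: algebra_simps)
    qed
    have S2: "S (M*j) = 2" using part[of 0] jh by auto
    have sp: "S (M*j) = sum f {M*j+1..<M*j+2*h+1} + sum f {M*j+2*h+1..<M*j+1+M}"
      unfolding S_def by (intro sum.atLeastLessThan_concat[symmetric]) (auto simp: M_def)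
    have "sum f {M*j+1..<M*j+2*h+1} = sum (\<lambda>_. -1) {M*j+1..<M*j+2*h+1}"
    proof (rule sum.cong)
      fix y assume y: "y \<in> {M*j+1..<M*j+2*h+1}"
      have "1 \<le> y - M*j" "y - M*j \<le> 2*h" "M*j + (y - M*j) \<le> n" using y jM by (auto simp: M_def)
      hence "f (M*j + (y - M*j)) = -1" using F3[of j] by blast
      thus "f y = -1" using y by simp
    qed simp
    hence s1: "sum f {M*j+1..<M*j+2*h+1} = - int (2*h)" by simp
    let ?B = "{M*j+2*h+1..<M*j+1+M}"
    have cB: "card ?B = 2*h+2" by (simp add: M_def)
    have e: "sum (\<lambda>y. - f y) ?B \<le> -1 * int (card ?B)"
      using S2 sp s1 cB by (simp add: sum_negf)
    have "\<forall>y\<in>?B. - f y = -1"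
    proof (rule all_eq_lower[OF _ _ e])
      show "\<forall>y\<in>?B. -1 \<le> - f y"
      proof
        fix y assume "y \<in> ?B"
        hence "y \<in> {1..n}" using jM by auto
        hence "f y \<in> {-1,1}" using pm by blast
        thus "-1 \<le> - f y" by auto
      qed
    qed simp
    moreover have "M*j + r \<in> ?B" using r1 r2 by auto
    ultimately show ?thesis by force
  qed
  have fval: "f y = (if 1 \<le> y mod M \<and> y mod M \<le> 2*h then -1 else 1)" if y: "y \<in> {1..n}" for y
  proof -
    define j where "j = y div M"
    define r where "r = y mod M"
    have yjr: "y = M*j + r" unfolding j_def r_def by simp
    have rM: "r < M" unfolding r_def M_def by simp
    have nlt: "n < M*(h+1)" using nM by (simp add: M_def algebra_simps)
    have yn: "y \<le> n" using y by simp
    show ?thesis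
    proof (cases "1 \<le> r \<and> r \<le> 2*h")
      case True
      have "M*j + r \<le> n" using yn yjr by simp
      hence "f (M*j + r) = -1" using F3[of j] True by simp
      thus ?thesis unfolding r_def[symmetric] using True yjr by simp
    next
      case False
      hence rc: "r = 0 \<or> 2*h+1 \<le> r" by auto
      have Mj: "M*j \<le> y" using yjr by simp
      have jh: "j \<le> h"
      proof (rule ccontr)
        assume "\<not> j \<le> h"
        hence "M*(h+1) \<le> M * j" by (intro mult_le_mono2) simp
        thus False using Mj yn nlt by linarith
      qed
      show ?thesis
      proof (cases "r = 0")
        case True
        have j0: "j \<noteq> 0" using y yjr True by auto
        then obtain k where k: "j = Suc k" by (cases j) auto
        have yk: "y = M*k + M" using yjr True k by simp
        have "k < h" using jh k by simp
        hence "f (M*k + M) = 1" by (intro F4) (auto simp: M_def)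
        thus ?thesis unfolding r_def[symmetric] using True yk by simp
      next
        case False2: False
        hence r2: "2*h+1 \<le> r" using rc by auto
        have "j < h"
        proof (rule ccontr)
          assume "\<not> j < h"
          hence "j = h" using jh by simp
          hence "y = M*h + r" using yjr by simp
          thus False using yn nM r2 by linarith
        qed
        hence "f (M*j + r) = 1" using r2 rM by (intro F4) auto
        thus ?thesis unfolding r_def[symmetric] using r2 yjr by simp
      qed
    qed
  qed
  define m where "m = p*q"
  have Mpq: "M = 2*p*q" using pq by (simp add: M_def)
  define A where "A = (\<lambda>i. 1 + i*p) ` {..<M}"
  have Aeq: "A = {1 + i*p | i. i < M}" unfolding A_def by blast
  have kap: "is_kAP M A"
    unfolding is_kAP_def Aeq using p3 by (intro exI[of _ 1] exI[of _ p]) simp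
  have big: "(2*m - 1)*p + 2 \<le> m*m"
  proof -
    have "3*(p*m) \<le> q*(p*m)" using q3 by (intro mult_le_mono1)
    hence "3*(p*m) \<le> m*m" by (simp add: m_def algebra_simps)
    moreover have "(2*m - 1)*p \<le> 2*(p*m)" by (simp add: algebra_simps)
    moreover have "p*m \<ge> 2"
    proof -
      have "m \<ge> 1" using p3 q3 by (simp add: m_def)
      hence "p*1 \<le> p*m" by (intro mult_le_mono2)
      hence "p \<le> p*m" by simp
      thus ?thesis using p3 by linarith
    qed
    ultimately show ?thesis by linarith
  qed
  have nm: "n = m*m - 1" using nn pq m_def by (simp add: algebra_simps)
  have Asub: "A \<subseteq> {1..n}"
  proof
    fix x assume "x \<in> A"
    then obtain i where i: "i < M" "x = 1 + i*p" unfolding A_def by auto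
    have "i \<le> 2*m - 1" using i Mpq m_def by simp
    hence ip: "i*p \<le> (2*m - 1)*p" by (intro mult_le_mono1)
    have mm: "m*m \<ge> 1" using big by linarith
    have n1: "n + 1 = m*m" using nm mm by simp
    have "x \<le> n" using ip big n1 i(2) by linarith
    thus "x \<in> {1..n}" using i by simp
  qed
  define G where "G j = (if j < q then -1 else (1::int))" for j
  have fA: "f (1 + i*p) = G (i mod (2*q))" if "i < M" for i
  proof -
    define s where "s = i div (2*q)"
    define j where "j = i mod (2*q)"
    have "i = 2*q*s + j" unfolding s_def j_def by simp
    hence e1: "1 + i*p = M*s + (1 + j*p)" using Mpq by (simp add: algebra_simps)
    have j2: "j < 2*q" unfolding j_def using q3 by simp
    have "j*p \<le> (2*q - 1)*p" using j2 by (intro mult_le_mono1) simp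
    hence jp: "j*p \<le> 2*q*p - p" by (simp add: diff_mult_distrib)
    have pq2: "p \<le> 2*q*p" using mult_le_mono1[of 1 "2*q" p] q3 by simp
    have M2: "M = 2*q*p" using Mpq by simp
    have "(j+1)*p \<le> (2*q)*p" using j2 by (intro mult_le_mono1) simp
    hence "j*p + p \<le> 2*q*p" by (simp add: algebra_simps)
    hence "1 + j*p < M" unfolding M2 using p3 by linarith
    hence md: "(1 + i*p) mod M = 1 + j*p" using e1 by simp
    have iff: "(1 + j*p \<le> 2*h) = (j < q)"
    proof
      assume a: "1 + j*p \<le> 2*h"
      show "j < q"
      proof (rule ccontr)
        assume "\<not> j < q"
        hence "q*p \<le> j*p" by (intro mult_le_mono1) simp
        thus False using a pq by (simp add: mult.commute)
      qed
    next
      assume "j < q"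
      hence "(j+1)*p \<le> q*p" by (intro mult_le_mono1) simp
      thus "1 + j*p \<le> 2*h" using pq p3 by (simp add: algebra_simps)
    qed
    have "1 + i*p \<in> {1..n}" using Asub that unfolding A_def by auto
    hence "f (1 + i*p) = (if 1 \<le> (1+i*p) mod M \<and> (1+i*p) mod M \<le> 2*h then -1 else 1)"
      by (rule fval)
    thus ?thesis using md iff unfolding G_def j_def by simp
  qed
  have G0: "(\<Sum>j<2*q. G j) = 0"
  proof -
    have "(\<Sum>j<2*q. G j) = sum G {0..<q} + sum G {q..<2*q}"
      by (simp add: atLeast0LessThan[symmetric] sum.atLeastLessThan_concat)
    also have "sum G {0..<q} = sum (\<lambda>_. -1) {0..<q}" by (rule sum.cong) (auto simp: G_def)
    also have "sum G {q..<2*q} = sum (\<lambda>_. 1) {q..<2*q}" by (rule sum.cong) (auto simp: G_def)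
    finally show ?thesis by simp
  qed
  have "sum f A = (\<Sum>i<M. f (1 + i*p))"
    unfolding A_def using p3 by (subst sum.reindex) (auto simp: inj_on_def)
  also have "\<dots> = (\<Sum>i<M. G (i mod (2*q)))"
  proof (rule sum.cong)
    fix i assume "i \<in> {..<M}"
    thus "f (1 + i*p) = G (i mod (2*q))" by (intro fA) simp
  qed simp
  also have "\<dots> = 0"
  proof -
    have "M = 2*q*p" using Mpq by simp
    thus ?thesis using periodic_sum[OF G0, of p] q3 by simp
  qed
  finally have "sum f A = 0" .
  thus ?thesis using Asub kap unfolding M_def by blast
qed


lemma allpos:
  fixes g :: "nat \<Rightarrow> int" and K n :: nat
  assumes pm: "\<forall>x\<in>{1..n}. g x \<in> {-1,1}" and K: "K > 0" "even K"
  and nz: "\<forall>x. x + K \<le> n \<longrightarrow> sum g {x+1..<x+1+K} \<noteq> 0"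
  and s0: "sum g {1..<1+K} > 0"
  shows "\<forall>x. x + K \<le> n \<longrightarrow> sum g {x+1..<x+1+K} > 0"
proof (intro allI impI)
  fix x assume "x + K \<le> n" thus "sum g {x+1..<x+1+K} > 0"
  proof (induction x)
    case 0 thus ?case using s0 by simp
  next
    case (Suc x)
    hence IH: "sum g {x+1..<x+1+K} > 0" by simp
    have "\<forall>y\<in>{x+1..<x+1+K}. g y \<in> {-1,1}" using pm Suc.prems by auto
    hence "even (sum g {x+1..<x+1+K}) = even (card {x+1..<x+1+K})"
      by (intro sum_pm1_even) auto
    hence "even (sum g {x+1..<x+1+K})" using K by simp
    hence ge2: "sum g {x+1..<x+1+K} \<ge> 2" using IH even_pos_ge2 by blast
    have d: "sum g {Suc x+1..<Suc x+1+K} = sum g {x+1..<x+1+K} - g (x+1) + g (x+1+K)"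
      using diffS[of K g x] K by simp
    have a1: "x+1 \<in> {1..n}" "x+1+K \<in> {1..n}" using Suc.prems by auto
    have "g (x+1) \<in> {-1,1}" using pm a1(1) by blast
    hence "g (x+1) \<le> 1" by auto
    have "g (x+1+K) \<in> {-1,1}" using pm a1(2) by blast
    hence "g (x+1+K) \<ge> -1" by auto
    have "sum g {Suc x+1..<Suc x+1+K} \<ge> 0" using d ge2 \<open>g (x+1) \<le> 1\<close> \<open>g (x+1+K) \<ge> -1\<close> by linarith
    moreover have "sum g {Suc x+1..<Suc x+1+K} \<noteq> 0" using nz Suc.prems by blast
    ultimately show ?case by linarith
  qed
qed

theorem proposition5p7:
  fixes k n :: nat and f :: "nat \<Rightarrow> int"
  assumes "k > 2" and "k mod 4 = 2"
    and "n = k^2 div 4 - 1"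
    and "\<not> prime (k div 2)"
    and "\<forall>x\<in>{1..n}. f x \<in> {-1, 1}"
    and "(\<Sum>x\<in>{1..n}. f x) = 0"
  shows "\<exists>A. A \<subseteq> {1..n} \<and> is_kAP k A \<and> (\<Sum>x\<in>A. f x) = 0"
proof (rule ccontr)
  assume no: "\<not> ?thesis"
  define m where "m = k div 2"
  have km: "k = 2*m" using assms(2) unfolding m_def by presburger
  have modd: "odd m" using assms(2) unfolding m_def by presburger
  define h where "h = m div 2"
  have mh: "m = 2*h+1" using modd unfolding h_def by presburger
  have m1: "m > 1" using assms(1) km mh by simp
  have np: "\<not> prime m" using assms(4) m_def by simp
  then obtain p where p: "p dvd m" "p \<noteq> 1" "p \<noteq> m"
    using m1 unfolding prime_nat_iff by blast
  then obtain q where q: "m = p*q" by (auto simp: dvd_def)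
  have p0: "p \<noteq> 0"
  proof
    assume "p = 0" hence "m = 0" using q by simp
    thus False using m1 by simp
  qed
  have q0: "q \<noteq> 0"
  proof
    assume "q = 0" hence "m = 0" using q by simp
    thus False using m1 by simp
  qed
  have q1: "q \<noteq> 1" using q p by auto
  have podd: "odd p" using q modd by simp
  have qodd: "odd q" using q modd by simp
  have p3: "p \<ge> 3" using p0 p(2) podd by presburger
  have q3: "q \<ge> 3" using q0 q1 qodd by presburger
  have kh: "k = 4*h+2" using km mh by simp
  have nn: "n = 4*h*h + 4*h"
  proof -
    have "k^2 = 4*(4*h*h + 4*h + 1)" using kh by (simp add: power2_eq_square algebra_simps)
    thus ?thesis using assms(3) by simp
  qed
  have pq: "p*q = 2*h+1" using q mh by simp
  have s0: "sum f {1..<n+1} = 0" using assms(6) by (simp add: atLeastLessThanSuc_atLeastAtMost)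
  have nz: "\<forall>x. x + k \<le> n \<longrightarrow> sum f {x+1..<x+1+k} \<noteq> 0"
  proof (intro allI impI)
    fix x assume xk: "x + k \<le> n"
    have eqs: "{x+1..<x+1+k} = {(x+1) + i*1 | i. i < k}"
    proof (intro equalityI subsetI)
      fix y assume "y \<in> {x+1..<x+1+k}"
      hence "y = (x+1) + (y-(x+1))*1 \<and> y-(x+1) < k" by auto
      thus "y \<in> {(x+1) + i*1 | i. i < k}" by blast
    next
      fix y assume "y \<in> {(x+1) + i*1 | i. i < k}"
      then obtain i where "y = x+1+i*1" "i<k" by blast
      thus "y \<in> {x+1..<x+1+k}" by simp
    qed
    have "is_kAP k {x+1..<x+1+k}"
      unfolding is_kAP_def eqs by (intro exI[of _ "x+1"] exI[of _ 1]) simp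
    moreover have "{x+1..<x+1+k} \<subseteq> {1..n}" using xk by auto
    ultimately show "sum f {x+1..<x+1+k} \<noteq> 0" using no by blast
  qed
  have h4: "h \<ge> 4"
  proof -
    have "3*3 \<le> p*q" using p3 q3 by (intro mult_le_mono) auto
    thus ?thesis using pq by simp
  qed
  have kn: "0 + k \<le> n"
  proof -
    have "4*h \<le> 4*h*h" using h4 by simp
    thus ?thesis using nn kh h4 by simp
  qed
  have "sum f {0+1..<0+1+k} \<noteq> 0" using nz kn by blast
  hence "sum f {1..<1+k} \<noteq> 0" by (metis add_0)
  hence "sum f {1..<1+k} > 0 \<or> sum f {1..<1+k} < 0" by linarith
  thus False
  proof
    assume "sum f {1..<1+k} > 0"
    hence "\<forall>x. x + k \<le> n \<longrightarrow> sum f {x+1..<x+1+k} > 0"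
      using allpos[OF assms(5) _ _ nz] kh by simp
    hence "\<exists>A. A \<subseteq> {1..n} \<and> is_kAP (4*h+2) A \<and> sum f A = 0"
      using main_lemma[OF pq p3 q3 nn assms(5) s0] kh by simp
    thus False using no kh by simp
  next
    assume neg: "sum f {1..<1+k} < 0"
    define g where "g x = - f x" for x
    have pmg: "\<forall>x\<in>{1..n}. g x \<in> {-1,1}" using assms(5) unfolding g_def by auto
    have sg: "sum g A = - sum f A" for A unfolding g_def by (simp add: sum_negf)
    have nzg: "\<forall>x. x + k \<le> n \<longrightarrow> sum g {x+1..<x+1+k} \<noteq> 0"
    proof (intro allI impI)
      fix x assume "x + k \<le> n"
      hence "sum f {x+1..<x+1+k} \<noteq> 0" using nz by blast
      thus "sum g {x+1..<x+1+k} \<noteq> 0" using sg[of "{x+1..<x+1+k}"] by linarith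
    qed
    have "sum g {1..<1+k} > 0" using neg sg[of "{1..<1+k}"] by linarith
    hence "\<forall>x. x + k \<le> n \<longrightarrow> sum g {x+1..<x+1+k} > 0"
      using allpos[OF pmg _ _ nzg] kh by simp
    moreover have "sum g {1..<n+1} = 0" using s0 sg[of "{1..<n+1}"] by linarith
    ultimately have "\<exists>A. A \<subseteq> {1..n} \<and> is_kAP (4*h+2) A \<and> sum g A = 0"
      using main_lemma[OF pq p3 q3 nn pmg] kh by simp
    thus False using no kh sg by simp
  qed
qed

end
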